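(* Let $p\ge 1$, $\sigma^2>0$, let $\boldsymbol\beta=(\beta_1,\dots,\beta_p)^\top\in\mathbb{R}^p$ be not identically zero (entries of arbitrary sign), and let $\Delta=\mathrm{diag}(\delta_1^2,\dots,\delta_p^2)$ with all $\delta_i^2>0$. Let $\Sigma=\sigma^2\boldsymbol\beta\boldsymbol\beta^\top+\Delta$. Assume $\sum_{i=1}^p \beta_i/\delta_i^2\ge 0$ and $\beta_1\le\beta_2\le\cdots\le\beta_p$. 1. Let $R_1=1/\sigma^2$ and, for $2\le i\le p$, $$R_i=\frac{1}{\sigma^2}+\sum_{j=1}^{i-1}\frac{\beta_j}{\delta_j^2}(\beta_j-\beta_i)=\frac{1}{\sigma^2}+\sum_{j=1}^{i}\frac{\beta_j}{\delta_j^2}(\beta_j-\beta_i).$$ Then there exists $s\le p$ such that $0<R_1\le R_2\le\cdots\le R_s\ge R_{s+1}\ge\cdots\ge R_p$. In particular, with $\ell=\max\{i: R_i>0\}$, one has $R_i>0$ if and only if $i\le \ell$, and the sequence $(R_i)$ crosses zero at most once. 2. Let $w^L$ be the unique solution of $\min_{w\in\mathbb{R}^p} w^\top\Sigma w$ subject to $w^\top\mathbf{1}_p=1$ and $w_i\ge0$ for all $i$; let $K=\{i: w^L_i>0\}$ and $k=|K|$. Then $k=\ell$ and $K=\{1,2,\dots,\ell\}$. Moreover, letting $\Sigma^K$ be the $k\times k$ submatrix of $\Sigma$ formed by its first $k$ rows and columns and $$w^K=\frac{(\Sigma^K)^{-1}\mathbf{1}_k}{\mathbf{1}_k^\top(\Sigma^K)^{-1}\mathbf{1}_k},$$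 the solution $w^L$ is given by $w^L_i=w^K_i$ for $i=1,\dots,k$ and $w^L_i=0$ for $i=k+1,\dots,p$.
   Context: $\mathbf{1}_m$ denotes the all-ones vector in $\mathbb{R}^m$. The sign normalization $\sum_i\beta_i/\delta_i^2\ge0$ and the increasing ordering of the $\beta_i$ are standing assumptions under which the theorem is stated (replacing $\boldsymbol\beta$ by $-\boldsymbol\beta$ and reordering assets do not change the problem). *)

theory Defs
  imports Complex_Main "Jordan_Normal_Form.Gauss_Jordan_Elimination"
begin

text \<open>All vectors are real functions on indices 1..p (values outside are irrelevant).
  sigma2 = \<sigma>^2, beta i = \<beta>_i, delta2 i = \<delta>_i^2.\<close>

definition Sigma :: "real \<Rightarrow> (nat \<Rightarrow> real) \<Rightarrow> (nat \<Rightarrow> real) \<Rightarrow> nat \<Rightarrow> nat \<Rightarrow> real" where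
  "Sigma sigma2 beta delta2 i j = sigma2 * beta i * beta j + (if i = j then delta2 i else 0)"

definition quad_form :: "nat \<Rightarrow> (nat \<Rightarrow> nat \<Rightarrow> real) \<Rightarrow> (nat \<Rightarrow> real) \<Rightarrow> real" where
  "quad_form p S w = (\<Sum>i=1..p. \<Sum>j=1..p. w i * S i j * w j)"

definition feasible :: "nat \<Rightarrow> (nat \<Rightarrow> real) \<Rightarrow> bool" where
  "feasible p w \<longleftrightarrow> (\<Sum>i=1..p. w i) = 1 \<and> (\<forall>i\<in>{1..p}. w i \<ge> 0)"

definition is_min_solution :: "nat \<Rightarrow> (nat \<Rightarrow> nat \<Rightarrow> real) \<Rightarrow> (nat \<Rightarrow> real) \<Rightarrow> bool" where
  "is_min_solution p S w \<longleftrightarrow> feasible p w \<and> (\<forall>v. feasible p v \<longrightarrow> quad_form p S w \<le> quad_form p S v)"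

definition R_seq :: "real \<Rightarrow> (nat \<Rightarrow> real) \<Rightarrow> (nat \<Rightarrow> real) \<Rightarrow> nat \<Rightarrow> real" where
  "R_seq sigma2 beta delta2 i = 1 / sigma2 + (\<Sum>j=1..i-1. beta j / delta2 j * (beta j - beta i))"

text \<open>Leading k x k submatrix (rows/columns 1..k, stored 0-based in a JNF matrix).\<close>
definition sub_mat :: "(nat \<Rightarrow> nat \<Rightarrow> real) \<Rightarrow> nat \<Rightarrow> real mat" where
  "sub_mat S k = mat k k (\<lambda>(i, j). S (i + 1) (j + 1))"

definition ones_vec :: "nat \<Rightarrow> real vec" where
  "ones_vec k = vec k (\<lambda>_. 1)"

definition wK :: "(nat \<Rightarrow> nat \<Rightarrow> real) \<Rightarrow> nat \<Rightarrow> nat \<Rightarrow> real" where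
  "wK S k i = (let Sinv = the (mat_inverse (sub_mat S k));
                   u = Sinv *\<^sub>v ones_vec k
               in u $ (i - 1) / (ones_vec k \<bullet> u))"

end

theory Submission imports Defs "Jordan_Normal_Form.Determinant" begin

definition Bs :: "(nat \<Rightarrow> real) \<Rightarrow> (nat \<Rightarrow> real) \<Rightarrow> nat \<Rightarrow> real" where
  "Bs b d m = (\<Sum>j=1..m. b j / d j)"
definition Qs :: "(nat \<Rightarrow> real) \<Rightarrow> (nat \<Rightarrow> real) \<Rightarrow> nat \<Rightarrow> real" where
  "Qs b d m = (\<Sum>j=1..m. b j * b j / d j)"

lemma R_sum: assumes "i \<ge> 1"
  shows "R_seq s b d i = 1 / s + (\<Sum>j=1..i. b j / d j * (b j - b i))"
proof -
  have e: "{1..i} = insert i {1..i-1}" using assms by auto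
  have "(\<Sum>j=1..i. b j / d j * (b j - b i)) = (\<Sum>j=1..i-1. b j / d j * (b j - b i))"
    by (subst e, subst sum.insert) auto
  then show ?thesis unfolding R_seq_def by simp
qed

lemma R_closed: "R_seq s b d i = 1 / s + Qs b d i - b i * Bs b d i"
proof (cases "i \<ge> 1")
  case True
  have "(\<Sum>j=1..i. b j / d j * (b j - b i)) = Qs b d i - b i * Bs b d i"
    unfolding Qs_def Bs_def sum_distrib_left sum_subtractf[symmetric]
    by (rule sum.cong) (auto simp: diff_divide_distrib add_divide_distrib algebra_simps)
  then show ?thesis using R_sum[OF True] by simp
next
  case False
  then show ?thesis by (simp add: R_seq_def Qs_def Bs_def)
qed

lemma R_diff: "R_seq s b d (Suc i) - R_seq s b d i = (b i - b (Suc i)) * Bs b d i"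
  unfolding R_closed Qs_def Bs_def by (simp add: field_simps)

lemma chain_up: fixes f :: "nat \<Rightarrow> real"
  assumes "\<forall>k. a \<le> k \<and> k < b \<longrightarrow> f k \<le> f (Suc k)" "a \<le> b" shows "f a \<le> f b"
  using assms
proof (induction b)
  case 0 then show ?case by simp
next
  case (Suc b)
  show ?case
  proof (cases "a = Suc b")
    case False
    then have "f a \<le> f b" using Suc by auto
    moreover have "f b \<le> f (Suc b)" using Suc False by auto
    ultimately show ?thesis by simp
  qed simp
qed

lemma chain_down: fixes f :: "nat \<Rightarrow> real"
  assumes "\<forall>k. a \<le> k \<and> k < b \<longrightarrow> f (Suc k) \<le> f k" "a \<le> b" shows "f b \<le> f a"
  using chain_up[of a b "\<lambda>k. - f k"] assms by auto

lemma quad_closed: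
  "quad_form p (Sigma s b d) w = s * (\<Sum>i=1..p. b i * w i)^2 + (\<Sum>i=1..p. d i * (w i)^2)"
proof -
  have "quad_form p (Sigma s b d) w =
     (\<Sum>i=1..p. \<Sum>j=1..p. s * ((b i * w i) * (b j * w j)) + (if i = j then d i * (w i)^2 else 0))"
    unfolding quad_form_def Sigma_def
    by (intro sum.cong refl) (auto simp: algebra_simps power2_eq_square)
  also have "\<dots> = s * (\<Sum>i=1..p. \<Sum>j=1..p. (b i * w i) * (b j * w j)) + (\<Sum>i=1..p. d i * (w i)^2)"
    by (simp add: sum.distrib sum_distrib_left)
  also have "(\<Sum>i=1..p. \<Sum>j=1..p. (b i * w i) * (b j * w j)) = (\<Sum>i=1..p. b i * w i)^2"
    by (simp add: power2_eq_square sum_product)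
  finally show ?thesis .
qed

lemma Bs_Suc: "Bs b d (Suc m) = Bs b d m + b (Suc m) / d (Suc m)"
  by (simp add: Bs_def)
lemma Qs_Suc: "Qs b d (Suc m) = Qs b d m + b (Suc m) * b (Suc m) / d (Suc m)"
  by (simp add: Qs_def)

lemma kkt:
  fixes p :: nat and s :: real and b d v w :: "nat \<Rightarrow> real"
  assumes fw: "feasible p w" and fv: "feasible p v"
    and G: "\<forall>i\<in>{1..p}. (v i - w i) * (s * b i * (\<Sum>j=1..p. b j * w j) + d i * w i) \<ge> (v i - w i) * lam"
  shows "quad_form p (Sigma s b d) v - quad_form p (Sigma s b d) w
     \<ge> s * (\<Sum>i=1..p. b i * (v i - w i))^2 + (\<Sum>i=1..p. d i * (v i - w i)^2)"
proof -
  define T where "T = (\<Sum>j=1..p. b j * w j)"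
  define E where "E = (\<Sum>j=1..p. b j * (v j - w j))"
  have TE: "(\<Sum>j=1..p. b j * v j) = T + E"
    unfolding T_def E_def sum.distrib[symmetric] by (rule sum.cong) (auto simp: algebra_simps)
  have dv: "(\<Sum>i=1..p. d i * (v i)^2) = (\<Sum>i=1..p. d i * (w i)^2) + (\<Sum>i=1..p. d i * (v i - w i)^2)
      + 2 * (\<Sum>i=1..p. d i * w i * (v i - w i))"
    unfolding sum.distrib[symmetric] sum_distrib_left by (rule sum.cong) (auto simp: algebra_simps power2_eq_square)
  have sG: "(\<Sum>i=1..p. (v i - w i) * (s * b i * T + d i * w i)) = s * T * E + (\<Sum>i=1..p. d i * w i * (v i - w i))"
    unfolding E_def sum_distrib_left sum.distrib[symmetric] by (rule sum.cong) (auto simp: algebra_simps)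
  have "(\<Sum>i=1..p. (v i - w i) * (s * b i * T + d i * w i)) \<ge> (\<Sum>i=1..p. (v i - w i) * lam)"
    using G unfolding T_def by (intro sum_mono) auto
  also have "(\<Sum>i=1..p. (v i - w i) * lam) = ((\<Sum>i=1..p. v i) - (\<Sum>i=1..p. w i)) * lam"
    by (simp add: sum_distrib_right[symmetric] sum_subtractf[symmetric])
  also have "\<dots> = 0" using fw fv by (simp add: feasible_def)
  finally have "s * T * E + (\<Sum>i=1..p. d i * w i * (v i - w i)) \<ge> 0" using sG by simp
  then show ?thesis unfolding quad_closed TE dv E_def[symmetric] T_def[symmetric]
    by (simp add: power2_eq_square algebra_simps)
qed

lemma quad_nonneg:
  fixes p :: nat and s :: real and b d e :: "nat \<Rightarrow> real"
  assumes "s \<ge> 0" "\<forall>i\<in>{1..p}. d i > 0"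
  shows "s * (\<Sum>i=1..p. b i * e i)^2 + (\<Sum>i=1..p. d i * (e i)^2) \<ge> (\<Sum>i=1..p. d i * (e i)^2)"
    "(\<Sum>i=1..p. d i * (e i)^2) \<ge> 0"
proof -
  show "(\<Sum>i=1..p. d i * (e i)^2) \<ge> 0" using assms by (intro sum_nonneg) (simp add: less_imp_le)
  show "s * (\<Sum>i=1..p. b i * e i)^2 + (\<Sum>i=1..p. d i * (e i)^2) \<ge> (\<Sum>i=1..p. d i * (e i)^2)"
    using assms by simp
qed

lemma quad_zero:
  fixes p :: nat and s :: real and b d e :: "nat \<Rightarrow> real"
  assumes "s \<ge> 0" "\<forall>i\<in>{1..p}. d i > 0"
    and "s * (\<Sum>i=1..p. b i * e i)^2 + (\<Sum>i=1..p. d i * (e i)^2) \<le> 0"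
  shows "\<forall>i\<in>{1..p}. e i = 0"
proof -
  have "(\<Sum>i=1..p. d i * (e i)^2) \<le> 0" using assms(3) quad_nonneg(1)[OF assms(1,2), of e b] by linarith
  moreover have "\<forall>i\<in>{1..p}. d i * (e i)^2 \<ge> 0" using assms(2) by auto
  ultimately have "\<forall>i\<in>{1..p}. d i * (e i)^2 = 0"
    using sum_nonneg_eq_0_iff[of "{1..p}" "\<lambda>i. d i * (e i)^2"]
    by (metis (no_types, lifting) finite_atLeastAtMost order_antisym sum_nonneg)
  then show ?thesis using assms(2) by (metis less_irrefl mult_eq_0_iff power_eq_0_iff)
qed


context
  fixes p :: nat and s :: real and b d :: "nat \<Rightarrow> real"
  assumes p: "p \<ge> 1" and spos: "s > 0"
    and dpos: "\<forall>i\<in>{1..p}. d i > 0"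
    and sign: "Bs b d p \<ge> 0"
    and sorted: "\<forall>i. 1 \<le> i \<and> i < p \<longrightarrow> b i \<le> b (i + 1)"
begin

lemma b_mono: "1 \<le> i \<Longrightarrow> i \<le> j \<Longrightarrow> j \<le> p \<Longrightarrow> b i \<le> b j"
  using chain_up[of i j b] sorted by auto

lemma Bs_pos_up: assumes "1 \<le> i" "i \<le> j" "j \<le> p" "Bs b d i > 0" shows "Bs b d j > 0"
proof -
  obtain k where k: "k \<in> {1..i}" "b k > 0"
  proof (rule ccontr)
    assume "\<not> thesis"
    with that have "\<forall>k\<in>{1..i}. b k / d k \<le> 0" using dpos assms
      by (intro ballI divide_nonpos_pos) (auto simp: not_less, meson not_less)
    then have "Bs b d i \<le> 0" unfolding Bs_def by (intro sum_nonpos) auto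
    with assms show False by simp
  qed
  have "Bs b d i \<le> Bs b d j"
  proof (rule chain_up)
    show "\<forall>m. i \<le> m \<and> m < j \<longrightarrow> Bs b d m \<le> Bs b d (Suc m)"
    proof (intro allI impI)
      fix m assume m: "i \<le> m \<and> m < j"
      have "b k \<le> b (Suc m)" using k m assms by (intro b_mono) auto
      moreover have "d (Suc m) > 0" using dpos m assms by auto
      ultimately have "b (Suc m) / d (Suc m) \<ge> 0" using k by simp
      then show "Bs b d m \<le> Bs b d (Suc m)" by (simp add: Bs_Suc)
    qed
  qed (use assms in auto)
  with assms show ?thesis by simp
qed

lemma unimodal:
  "\<exists>t. 1 \<le> t \<and> t \<le> p
     \<and> (\<forall>i. 1 \<le> i \<and> i < t \<longrightarrow> R_seq s b d i \<le> R_seq s b d (i + 1))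
     \<and> (\<forall>i. t \<le> i \<and> i < p \<longrightarrow> R_seq s b d (i + 1) \<le> R_seq s b d i)"
proof (cases "\<exists>i. 1 \<le> i \<and> i < p \<and> Bs b d i > 0")
  case True
  define t where "t = (LEAST i. 1 \<le> i \<and> i < p \<and> Bs b d i > 0)"
  have t: "1 \<le> t \<and> t < p \<and> Bs b d t > 0" unfolding t_def using True by (rule LeastI_ex)
  have lo: "Bs b d i \<le> 0" if "1 \<le> i" "i < t" for i
    using not_less_Least[of i "\<lambda>i. 1 \<le> i \<and> i < p \<and> Bs b d i > 0"] that t unfolding t_def[symmetric]
    by auto
  have hi: "Bs b d i > 0" if "t \<le> i" "i \<le> p" for i
    using Bs_pos_up[of t i] t that by auto
  show ?thesis
  proof (intro exI conjI allI impI)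
    fix i assume i: "1 \<le> i \<and> i < t"
    have "b i \<le> b (Suc i)" using sorted i t by auto
    then have "(b i - b (Suc i)) * Bs b d i \<ge> 0" using lo[of i] i by (intro mult_nonpos_nonpos) auto
    then show "R_seq s b d i \<le> R_seq s b d (i + 1)" using R_diff[of s b d i] by simp
  next
    fix i assume i: "t \<le> i \<and> i < p"
    have "b i \<le> b (Suc i)" using sorted i t by auto
    then have "(b i - b (Suc i)) * Bs b d i \<le> 0" using hi[of i] i by (intro mult_nonpos_nonneg) auto
    then show "R_seq s b d (i + 1) \<le> R_seq s b d i" using R_diff[of s b d i] by simp
  qed (use t in auto)
next
  case False
  show ?thesis
  proof (intro exI conjI allI impI)
    fix i assume i: "1 \<le> i \<and> i < p"
    have "b i \<le> b (Suc i)" using sorted i by auto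
    then have "(b i - b (Suc i)) * Bs b d i \<ge> 0" using False i by (intro mult_nonpos_nonpos) auto
    then show "R_seq s b d i \<le> R_seq s b d (i + 1)" using R_diff[of s b d i] by simp
  qed (use p in auto)
qed

lemma R1: "R_seq s b d 1 > 0" using spos by (simp add: R_seq_def)

lemma R_down_closed: assumes "1 \<le> j" "j \<le> i" "i \<le> p" "R_seq s b d i > 0" shows "R_seq s b d j > 0"
proof -
  obtain t where t: "1 \<le> t" "t \<le> p"
     "\<forall>i. 1 \<le> i \<and> i < t \<longrightarrow> R_seq s b d i \<le> R_seq s b d (Suc i)"
     "\<forall>i. t \<le> i \<and> i < p \<longrightarrow> R_seq s b d (Suc i) \<le> R_seq s b d i"
    using unimodal by auto
  show ?thesis
  proof (cases "j \<le> t")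
    case True
    have "R_seq s b d 1 \<le> R_seq s b d j" using t(3) True assms by (intro chain_up) auto
    then show ?thesis using R1 by simp
  next
    case False
    have "R_seq s b d i \<le> R_seq s b d j" using t(4) False assms
      by (intro chain_down[of j i "R_seq s b d"]) auto
    then show ?thesis using assms by simp
  qed
qed


context
  fixes l :: nat
  assumes l1: "1 \<le> l" and lp: "l \<le> p"
    and lchar: "\<forall>i\<in>{1..p}. R_seq s b d i > 0 \<longleftrightarrow> i \<le> l"
begin

lemma Bl_nonneg: "Bs b d l \<ge> 0"
proof (rule ccontr)
  assume neg: "\<not> Bs b d l \<ge> 0"
  then have "l \<noteq> p" using sign by auto
  with lp have lt: "l < p" by simp
  have "b l \<le> b (Suc l)" using sorted l1 lt by auto
  then have "(b l - b (Suc l)) * Bs b d l \<ge> 0" using neg by (intro mult_nonpos_nonpos) auto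
  then have "R_seq s b d (Suc l) \<ge> R_seq s b d l" using R_diff[of s b d l] by simp
  moreover have "R_seq s b d l > 0" using lchar l1 lp by auto
  ultimately have "R_seq s b d (Suc l) > 0" by simp
  then have "Suc l \<le> l" using lchar lt by (metis Suc_leI atLeastAtMost_iff le_add1 plus_1_eq_Suc)
  then show False by simp
qed

definition "Fl x = 1 / s + Qs b d l - x * Bs b d l"
definition "cc = 1 / s + Qs b d l"
definition "uu i = (if 1 \<le> i \<and> i \<le> l then Fl (b i) / d i else 0)"
definition "NN = (\<Sum>i=1..l. uu i)"
definition "ww i = uu i / NN"

lemma F_pos: assumes "1 \<le> i" "i \<le> l" shows "Fl (b i) > 0"
proof -
  have "Fl (b l) = R_seq s b d l" unfolding Fl_def R_closed by simp
  also have "\<dots> > 0" using lchar l1 lp by auto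
  finally have "Fl (b l) > 0" .
  moreover have "b i \<le> b l" using assms lp by (intro b_mono) auto
  then have "Fl (b i) \<ge> Fl (b l)" unfolding Fl_def using Bl_nonneg by (simp add: mult_right_mono)
  ultimately show ?thesis by simp
qed

lemma F_nonpos: assumes "l < i" "i \<le> p" shows "Fl (b i) \<le> 0"
proof -
  have "Fl (b (Suc l)) = R_seq s b d (Suc l)" unfolding Fl_def R_closed Qs_Suc Bs_Suc
    by (simp add: algebra_simps)
  also have "\<dots> \<le> 0" using lchar assms l1 by (metis Suc_leI atLeastAtMost_iff not_less_eq_eq order.trans not_less le_SucI)
  finally have "Fl (b (Suc l)) \<le> 0" .
  moreover have "b (Suc l) \<le> b i" using assms l1 by (intro b_mono) auto
  then have "Fl (b i) \<le> Fl (b (Suc l))" unfolding Fl_def using Bl_nonneg by (simp add: mult_right_mono)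
  ultimately show ?thesis by simp
qed

lemma uu_pos: "1 \<le> i \<Longrightarrow> i \<le> l \<Longrightarrow> uu i > 0"
  unfolding uu_def using F_pos dpos lp by auto

lemma NN_pos: "NN > 0"
  unfolding NN_def using uu_pos l1 by (intro sum_pos) auto

lemma ww_pos: "1 \<le> i \<Longrightarrow> i \<le> l \<Longrightarrow> ww i > 0"
  unfolding ww_def using uu_pos NN_pos by auto

lemma ww_zero: "\<not> (1 \<le> i \<and> i \<le> l) \<Longrightarrow> ww i = 0"
  unfolding ww_def uu_def by auto

lemma sum_restrict: "(\<Sum>i=1..p. f i * uu i) = (\<Sum>i=1..l. f i * uu i)"
  by (rule sum.mono_neutral_right) (use lp in \<open>auto simp: uu_def\<close>)

lemma sum_bu: "(\<Sum>i=1..l. b i * uu i) = Bs b d l / s"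
proof -
  have "(\<Sum>i=1..l. b i * uu i) = (\<Sum>i=1..l. cc * (b i / d i) - Bs b d l * (b i * b i / d i))"
    by (rule sum.cong) (auto simp: uu_def Fl_def cc_def diff_divide_distrib add_divide_distrib algebra_simps)
  also have "\<dots> = cc * Bs b d l - Bs b d l * Qs b d l"
    unfolding sum_subtractf sum_distrib_left[symmetric] Bs_def Qs_def by simp
  also have "\<dots> = Bs b d l / s" unfolding cc_def by (simp add: algebra_simps)
  finally show ?thesis .
qed

lemma G_u: assumes "1 \<le> i" "i \<le> p"
  shows "s * b i * (\<Sum>j=1..l. b j * uu j) + d i * uu i = (if i \<le> l then cc else b i * Bs b d l)"
proof -
  have "d i > 0" using assms dpos by auto
  then show ?thesis using spos assms unfolding sum_bu by (auto simp: uu_def Fl_def cc_def)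
qed

lemma G_u_ge: assumes "l < i" "i \<le> p" shows "b i * Bs b d l \<ge> cc"
  using F_nonpos[OF assms] unfolding Fl_def cc_def by simp

lemma ww_feasible: "feasible p ww"
proof -
  have "(\<Sum>i=1..p. ww i) = (\<Sum>i=1..p. 1 * uu i) / NN" unfolding ww_def by (simp add: sum_divide_distrib)
  also have "\<dots> = 1" unfolding sum_restrict using NN_pos by (simp add: NN_def)
  finally show ?thesis unfolding feasible_def
    using ww_pos ww_zero by (auto simp: less_imp_le) (metis less_imp_le ww_pos ww_zero order_refl)
qed

lemma ww_kkt: assumes fv: "feasible p v"
  shows "\<forall>i\<in>{1..p}. (v i - ww i) * (s * b i * (\<Sum>j=1..p. b j * ww j) + d i * ww i) \<ge> (v i - ww i) * (cc / NN)"
proof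
  fix i assume i: "i \<in> {1..p}"
  have "(\<Sum>j=1..p. b j * ww j) = (\<Sum>j=1..l. b j * uu j) / NN"
    unfolding ww_def sum_divide_distrib[symmetric] times_divide_eq_right sum_restrict ..
  then have G: "s * b i * (\<Sum>j=1..p. b j * ww j) + d i * ww i
      = (s * b i * (\<Sum>j=1..l. b j * uu j) + d i * uu i) / NN"
    unfolding ww_def by (simp add: add_divide_distrib)
  show "(v i - ww i) * (s * b i * (\<Sum>j=1..p. b j * ww j) + d i * ww i) \<ge> (v i - ww i) * (cc / NN)"
  proof (cases "i \<le> l")
    case True
    then have "s * b i * (\<Sum>j=1..l. b j * uu j) + d i * uu i = cc" using G_u[of i] i by simp
    then show ?thesis unfolding G by simp
  next
    case False
    then have "ww i = 0" by (simp add: ww_zero)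
    moreover have "v i \<ge> 0" using fv i by (auto simp: feasible_def)
    moreover have "b i * Bs b d l / NN \<ge> cc / NN" using G_u_ge[of i] False i NN_pos
      by (simp add: divide_right_mono)
    moreover have "s * b i * (\<Sum>j=1..l. b j * uu j) + d i * uu i = b i * Bs b d l" using G_u[of i] i False by simp
    ultimately have "v i * (cc / NN) \<le> v i * (b i * Bs b d l / NN)" by (intro mult_left_mono) auto
    with \<open>ww i = 0\<close> \<open>s * b i * (\<Sum>j=1..l. b j * uu j) + d i * uu i = b i * Bs b d l\<close>
    show ?thesis unfolding G by simp
  qed
qed

lemma ww_min: "is_min_solution p (Sigma s b d) ww"
  unfolding is_min_solution_def
proof (intro conjI allI impI ww_feasible)
  fix v assume fv: "feasible p v"
  have "quad_form p (Sigma s b d) v - quad_form p (Sigma s b d) ww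
     \<ge> s * (\<Sum>i=1..p. b i * (v i - ww i))^2 + (\<Sum>i=1..p. d i * (v i - ww i)^2)"
    by (rule kkt[OF ww_feasible fv ww_kkt[OF fv]])
  moreover have "s * (\<Sum>i=1..p. b i * (v i - ww i))^2 + (\<Sum>i=1..p. d i * (v i - ww i)^2) \<ge> 0"
    using quad_nonneg(1)[where s=s and d=d and p=p and b=b and e="\<lambda>i. v i - ww i"]
      quad_nonneg(2)[where s=s and d=d and p=p and e="\<lambda>i. v i - ww i"] spos dpos by linarith
  ultimately show "quad_form p (Sigma s b d) ww \<le> quad_form p (Sigma s b d) v" by simp
qed

lemma ww_unique: assumes "is_min_solution p (Sigma s b d) v" shows "\<forall>i\<in>{1..p}. v i = ww i"
proof -
  have fv: "feasible p v" and le: "quad_form p (Sigma s b d) v \<le> quad_form p (Sigma s b d) ww"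
    using assms ww_feasible unfolding is_min_solution_def by auto
  have "quad_form p (Sigma s b d) v - quad_form p (Sigma s b d) ww
     \<ge> s * (\<Sum>i=1..p. b i * (v i - ww i))^2 + (\<Sum>i=1..p. d i * (v i - ww i)^2)"
    by (rule kkt[OF ww_feasible fv ww_kkt[OF fv]])
  with le have "s * (\<Sum>i=1..p. b i * (v i - ww i))^2 + (\<Sum>i=1..p. d i * (v i - ww i)^2) \<le> 0" by simp
  from quad_zero[OF _ dpos this] spos show ?thesis by simp
qed


lemma cc_pos: "cc > 0"
proof -
  have "Qs b d l \<ge> 0" unfolding Qs_def using dpos lp
    by (intro sum_nonneg) (auto intro!: divide_nonneg_pos)
  then show ?thesis unfolding cc_def using spos by (intro add_pos_nonneg) auto
qed

lemma dpos_l: "\<forall>i\<in>{1..l}. d i > 0" using dpos lp by auto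

lemma sum_shift2: "(\<Sum>i=1..n. \<Sum>j=1..n. f i j) = (\<Sum>a<n. \<Sum>c<n. f (Suc a) (Suc c))"
  by (simp add: sum.atLeast1_atMost_eq)

lemma A_quad:
  fixes x :: "real vec"
  assumes x: "x \<in> carrier_vec l"
  shows "x \<bullet> (sub_mat (Sigma s b d) l *\<^sub>v x) = quad_form l (Sigma s b d) (\<lambda>k. x $ (k - 1))"
proof -
  have "x \<bullet> (sub_mat (Sigma s b d) l *\<^sub>v x)
      = (\<Sum>a<l. x $ a * (\<Sum>c<l. Sigma s b d (Suc a) (Suc c) * x $ c))"
    using x unfolding scalar_prod_def
    by (intro sum.cong) (auto simp: sub_mat_def scalar_prod_def atLeast0LessThan)
  also have "\<dots> = (\<Sum>a<l. \<Sum>c<l. x $ a * Sigma s b d (Suc a) (Suc c) * x $ c)"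
    by (simp add: sum_distrib_left mult.assoc)
  also have "\<dots> = quad_form l (Sigma s b d) (\<lambda>k. x $ (k - 1))"
    unfolding quad_form_def sum_shift2 by simp
  finally show ?thesis .
qed

lemma A_det: "det (sub_mat (Sigma s b d) l) \<noteq> 0"
proof
  assume "det (sub_mat (Sigma s b d) l) = 0"
  then obtain x :: "real vec" where x: "x \<in> carrier_vec l" "x \<noteq> 0\<^sub>v l"
     "sub_mat (Sigma s b d) l *\<^sub>v x = 0\<^sub>v l"
    using det_0_iff_vec_prod_zero_field[of "sub_mat (Sigma s b d) l" l] by (auto simp: sub_mat_def)
  have "quad_form l (Sigma s b d) (\<lambda>k. x $ (k - 1)) = 0"
    using A_quad[OF x(1)] x by simp
  then have "s * (\<Sum>i=1..l. b i * x $ (i - 1))^2 + (\<Sum>i=1..l. d i * (x $ (i - 1))^2) \<le> 0"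
    unfolding quad_closed by simp
  from quad_zero[OF _ dpos_l this] spos have z: "\<forall>i\<in>{1..l}. x $ (i - 1) = 0" by simp
  have "x = 0\<^sub>v l"
  proof (rule eq_vecI)
    fix a assume "a < dim_vec (0\<^sub>v l :: real vec)"
    then have "a < l" by simp
    then show "x $ a = 0\<^sub>v l $ a" using z[rule_format, of "Suc a"] by simp
  qed (use x in simp)
  with x show False by simp
qed

lemma A_U: "sub_mat (Sigma s b d) l *\<^sub>v vec l (\<lambda>j. uu (Suc j)) = cc \<cdot>\<^sub>v ones_vec l"
proof (rule eq_vecI)
  fix a assume "a < dim_vec (cc \<cdot>\<^sub>v ones_vec l)"
  then have a: "a < l" by (simp add: ones_vec_def)
  have "(sub_mat (Sigma s b d) l *\<^sub>v vec l (\<lambda>j. uu (Suc j))) $ a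
      = (\<Sum>c<l. Sigma s b d (Suc a) (Suc c) * uu (Suc c))"
    using a by (auto simp: sub_mat_def atLeast0LessThan scalar_prod_def intro!: sum.cong)
  also have "\<dots> = (\<Sum>k=1..l. Sigma s b d (Suc a) k * uu k)"
    by (simp add: sum.atLeast1_atMost_eq)
  also have "\<dots> = (\<Sum>k=1..l. s * b (Suc a) * (b k * uu k) + (if k = Suc a then d (Suc a) * uu (Suc a) else 0))"
    unfolding Sigma_def by (intro sum.cong) (auto simp: algebra_simps)
  also have "\<dots> = s * b (Suc a) * (\<Sum>k=1..l. b k * uu k) + d (Suc a) * uu (Suc a)"
    using a by (simp add: sum.distrib sum_distrib_left[symmetric])
  also have "\<dots> = cc" using G_u[of "Suc a"] a lp by simp
  finally show "(sub_mat (Sigma s b d) l *\<^sub>v vec l (\<lambda>j. uu (Suc j))) $ a = (cc \<cdot>\<^sub>v ones_vec l) $ a"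
    using a by (simp add: ones_vec_def)
qed (simp add: sub_mat_def ones_vec_def)

lemma wK_eq: assumes "1 \<le> i" "i \<le> l" shows "wK (Sigma s b d) l i = ww i"
proof -
  define A where "A = sub_mat (Sigma s b d) l"
  define U where "U = vec l (\<lambda>j. uu (Suc j))"
  have A: "A \<in> carrier_mat l l" unfolding A_def sub_mat_def by simp
  have U: "U \<in> carrier_vec l" unfolding U_def by simp
  have on: "ones_vec l \<in> carrier_vec l" unfolding ones_vec_def by simp
  obtain B where B: "mat_inverse A = Some B"
  proof (cases "mat_inverse A")
    case None
    then have "A \<notin> Units (ring_mat TYPE(real) l ())" using mat_inverse(1)[OF A, where b="()"] by blast
    moreover have "A \<in> Units (ring_mat TYPE(real) l ())"
      using det_non_zero_imp_unit[OF A, where b="()"] A_det unfolding A_def by blast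
    ultimately show ?thesis by blast
  qed
  from mat_inverse(2)[OF A B] have BA: "B * A = 1\<^sub>m l" and Bc: "B \<in> carrier_mat l l" by auto
  have "U = B *\<^sub>v (A *\<^sub>v U)" using BA Bc A U by (metis assoc_mult_mat_vec one_mult_mat_vec)
  also have "\<dots> = cc \<cdot>\<^sub>v (B *\<^sub>v ones_vec l)" unfolding A_def U_def A_U
    using mult_mat_vec[OF Bc on] by simp
  finally have BU: "B *\<^sub>v ones_vec l = (1 / cc) \<cdot>\<^sub>v U" using cc_pos
    by (metis (no_types, lifting) less_irrefl smult_smult_assoc one_smult_vec nonzero_divide_eq_eq
        divide_self_if times_divide_eq_left mult_1)
  have s1: "ones_vec l \<bullet> U = NN"
    unfolding NN_def U_def ones_vec_def scalar_prod_def by (simp add: sum.atLeast1_atMost_eq atLeast0LessThan)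
  have "wK (Sigma s b d) l i = ((1 / cc) \<cdot>\<^sub>v U) $ (i - 1) / (ones_vec l \<bullet> ((1 / cc) \<cdot>\<^sub>v U))"
    unfolding wK_def Let_def A_def[symmetric] B by (simp only: option.sel BU)
  also have "\<dots> = ((1 / cc) * uu i) / ((1 / cc) * NN)"
    using assms U on s1 by (simp add: U_def scalar_prod_smult_right)
  also have "\<dots> = ww i" unfolding ww_def using cc_pos by simp
  finally show ?thesis .
qed


lemma ww_exists: "\<exists>W. is_min_solution p (Sigma s b d) W
   \<and> (\<forall>v. is_min_solution p (Sigma s b d) v \<longrightarrow> (\<forall>i\<in>{1..p}. v i = W i))
   \<and> (\<forall>i. 1 \<le> i \<and> i \<le> l \<longrightarrow> W i > 0 \<and> wK (Sigma s b d) l i = W i)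
   \<and> (\<forall>i. \<not> (1 \<le> i \<and> i \<le> l) \<longrightarrow> W i = 0)"
  by (rule exI[of _ ww]) (use ww_min ww_unique ww_pos wK_eq ww_zero in blast)

end

end


theorem theorem1:
  fixes p :: nat and sigma2 :: real and beta delta2 :: "nat \<Rightarrow> real"
  assumes p: "p \<ge> 1"
    and sigma2: "sigma2 > 0"
    and beta_nz: "\<exists>i\<in>{1..p}. beta i \<noteq> 0"
    and delta2: "\<forall>i\<in>{1..p}. delta2 i > 0"
    and sign: "(\<Sum>i=1..p. beta i / delta2 i) \<ge> 0"
    and sorted: "\<forall>i. 1 \<le> i \<and> i < p \<longrightarrow> beta i \<le> beta (i + 1)"
  defines "R \<equiv> R_seq sigma2 beta delta2"
    and "S \<equiv> Sigma sigma2 beta delta2"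
    and "l \<equiv> Max {i\<in>{1..p}. R_seq sigma2 beta delta2 i > 0}"
  shows
    "(\<forall>i\<in>{1..p}. R i = 1 / sigma2 + (\<Sum>j=1..i. beta j / delta2 j * (beta j - beta i)))
     \<and> (\<exists>s. 1 \<le> s \<and> s \<le> p \<and> 0 < R 1
            \<and> (\<forall>i. 1 \<le> i \<and> i < s \<longrightarrow> R i \<le> R (i + 1))
            \<and> (\<forall>i. s \<le> i \<and> i < p \<longrightarrow> R (i + 1) \<le> R i))
     \<and> (\<forall>i\<in>{1..p}. R i > 0 \<longleftrightarrow> i \<le> l)
     \<and> (\<exists>w. is_min_solution p S w \<and>
            (\<forall>v. is_min_solution p S v \<longrightarrow> (\<forall>i\<in>{1..p}. v i = w i)))
     \<and> (\<forall>wL. is_min_solution p S wL \<longrightarrow>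
          (let K = {i\<in>{1..p}. wL i > 0}; k = card K in
             k = l \<and> K = {1..l}
             \<and> (\<forall>i\<in>{1..k}. wL i = wK S k i)
             \<and> (\<forall>i\<in>{k<..p}. wL i = 0)))"
proof -
  have sign': "Bs beta delta2 p \<ge> 0" using sign by (simp add: Bs_def)
  note ctx = p sigma2 delta2 sign' sorted
  define P where "P = {i\<in>{1..p}. R_seq sigma2 beta delta2 i > 0}"
  have l_def': "l = Max P" unfolding l_def P_def ..
  have oneP: "1 \<in> P" using R1[OF ctx] p unfolding P_def by auto
  have finP: "finite P" unfolding P_def by simp
  have lP: "l \<in> P" unfolding l_def' using oneP finP by (intro Max_in) auto
  then have l1: "1 \<le> l" and lp: "l \<le> p" and Rl: "R_seq sigma2 beta delta2 l > 0"
    unfolding P_def by auto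
  have lchar: "\<forall>i\<in>{1..p}. R_seq sigma2 beta delta2 i > 0 \<longleftrightarrow> i \<le> l"
  proof
    fix i assume i: "i \<in> {1..p}"
    show "R_seq sigma2 beta delta2 i > 0 \<longleftrightarrow> i \<le> l"
    proof
      assume "R_seq sigma2 beta delta2 i > 0"
      then have "i \<in> P" using i unfolding P_def by auto
      then show "i \<le> l" unfolding l_def' using finP by simp
    next
      assume "i \<le> l"
      then show "R_seq sigma2 beta delta2 i > 0" using R_down_closed[OF ctx, of i l] i lp Rl by auto
    qed
  qed
  obtain W where W: "is_min_solution p S W"
     "\<forall>v. is_min_solution p S v \<longrightarrow> (\<forall>i\<in>{1..p}. v i = W i)"
     "\<forall>i. 1 \<le> i \<and> i \<le> l \<longrightarrow> W i > 0 \<and> wK S l i = W i"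
     "\<forall>i. \<not> (1 \<le> i \<and> i \<le> l) \<longrightarrow> W i = 0"
    using ww_exists[OF ctx l1 lp lchar] unfolding S_def by blast
  have part1: "\<forall>i\<in>{1..p}. R i = 1 / sigma2 + (\<Sum>j=1..i. beta j / delta2 j * (beta j - beta i))"
    unfolding R_def using R_sum by auto
  have part2: "\<exists>s. 1 \<le> s \<and> s \<le> p \<and> 0 < R 1
            \<and> (\<forall>i. 1 \<le> i \<and> i < s \<longrightarrow> R i \<le> R (i + 1))
            \<and> (\<forall>i. s \<le> i \<and> i < p \<longrightarrow> R (i + 1) \<le> R i)"
    unfolding R_def using unimodal[OF ctx] R1[OF ctx] by blast
  have part3: "\<forall>i\<in>{1..p}. R i > 0 \<longleftrightarrow> i \<le> l" unfolding R_def using lchar .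
  have part5: "(let K = {i\<in>{1..p}. wL i > 0}; k = card K in
             k = l \<and> K = {1..l}
             \<and> (\<forall>i\<in>{1..k}. wL i = wK S k i)
             \<and> (\<forall>i\<in>{k<..p}. wL i = 0))" if wL: "is_min_solution p S wL" for wL
  proof -
    have eq: "\<forall>i\<in>{1..p}. wL i = W i" using W(2) wL by blast
    have K: "{i\<in>{1..p}. wL i > 0} = {1..l}"
    proof (intro equalityI subsetI)
      fix i assume "i \<in> {i\<in>{1..p}. wL i > 0}"
      then show "i \<in> {1..l}" using eq W(4) by (metis (mono_tags, lifting) atLeastAtMost_iff less_irrefl mem_Collect_eq)
    next
      fix i assume "i \<in> {1..l}"
      then show "i \<in> {i\<in>{1..p}. wL i > 0}" using eq W(3) lp by auto
    qed
    show ?thesis unfolding Let_def K using eq W(3) W(4) lp by auto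
  qed
  show ?thesis using part1 part2 part3 W(1,2) part5 by blast
qed

end
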